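(* Let $\mathcal R'$ be a set of rows with the consecutive-ones property, $\pi$ a consecutive-ones ordering of $\mathcal R'$, and $Z$ a row such that $\mathcal R'\cup\{Z\}$ does not have the consecutive-ones property. Let $\mathcal R_Q$ be an overlap component of $\mathcal R'$ containing at least one row that meets $Z$. Let $A'$ be a row of $\mathcal R_Q$ meeting $Z$ whose right endpoint (last column in $\pi$) is leftmost among all rows of $\mathcal R_Q$ meeting $Z$, and let $B'$ be a row of $\mathcal R_Q$ meeting $Z$ whose left endpoint (first column in $\pi$) is rightmost among all rows of $\mathcal R_Q$ meeting $Z$. Then $\mathcal R_Q$ contains a suitable pair for $Z$ with respect to $\pi$ if and only if there is a column $c\notin Z$ lying in $\pi$ strictly after the right endpoint of $A'$ and strictly before the left endpoint of $B'$; in that case $\{A',B'\}$ is a suitable pair for $Z$ with respect to $\pi$.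
   Context: Each row is identified with the set of columns in which it has a 1. A consecutive-ones ordering of a set of rows is an ordering of all columns in which each of these rows occupies consecutive columns; a set of rows has the consecutive-ones property if such an ordering exists. Two rows overlap if they intersect and neither is a subset of the other; an overlap component of a set of rows is the vertex set of a connected component of the graph whose edges join overlapping rows. Suitable pair: distinct rows $A,B\in\mathcal R'$ form a suitable pair for $Z$ with respect to $\pi$ if they belong to the same overlap component of $\mathcal R'$, $A\cap Z\neq\emptyset$, $B\cap Z\neq\emptyset$, and there is a column $c\notin Z$ such that in $\pi$ every column of one of $A,B$ precedes $c$ and $c$ precedes every column of the other. *)

theory Defs
  imports Main
begin

text \<open>Columns form a finite set U (of some type 'c); a row is identified with
the set of columns in which it has a 1 (a subset of U).\<close>

definition col_ordering :: "'c set \<Rightarrow> 'c list \<Rightarrow> bool" where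
  "col_ordering U \<pi> \<longleftrightarrow> distinct \<pi> \<and> set \<pi> = U"

definition pos :: "'c list \<Rightarrow> 'c \<Rightarrow> nat" where
  "pos \<pi> c = (LEAST i. i < length \<pi> \<and> \<pi> ! i = c)"

definition consecutive_in :: "'c list \<Rightarrow> 'c set \<Rightarrow> bool" where
  "consecutive_in \<pi> R \<longleftrightarrow> (\<exists>i j. R = {\<pi> ! k | k. i \<le> k \<and> k \<le> j \<and> k < length \<pi>})"

definition c1_ordering :: "'c set \<Rightarrow> 'c set set \<Rightarrow> 'c list \<Rightarrow> bool" where
  "c1_ordering U Rs \<pi> \<longleftrightarrow> col_ordering U \<pi> \<and> (\<forall>R\<in>Rs. consecutive_in \<pi> R)"

definition has_C1P :: "'c set \<Rightarrow> 'c set set \<Rightarrow> bool" where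
  "has_C1P U Rs \<longleftrightarrow> (\<exists>\<pi>. c1_ordering U Rs \<pi>)"

definition overlap :: "'c set \<Rightarrow> 'c set \<Rightarrow> bool" where
  "overlap A B \<longleftrightarrow> A \<inter> B \<noteq> {} \<and> \<not> A \<subseteq> B \<and> \<not> B \<subseteq> A"

definition overlap_conn :: "'c set set \<Rightarrow> 'c set \<Rightarrow> 'c set \<Rightarrow> bool" where
  "overlap_conn Rs = (\<lambda>A B. A \<in> Rs \<and> B \<in> Rs \<and> overlap A B)\<^sup>*\<^sup>*"

definition overlap_component :: "'c set set \<Rightarrow> 'c set set \<Rightarrow> bool" where
  "overlap_component Rs Q \<longleftrightarrow> (\<exists>A\<in>Rs. Q = {B \<in> Rs. overlap_conn Rs A B})"

definition lend :: "'c list \<Rightarrow> 'c set \<Rightarrow> nat" where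
  "lend \<pi> A = Min (pos \<pi> ` A)"

definition rend :: "'c list \<Rightarrow> 'c set \<Rightarrow> nat" where
  "rend \<pi> A = Max (pos \<pi> ` A)"

definition suitable_pair ::
  "'c set \<Rightarrow> 'c set set \<Rightarrow> 'c set \<Rightarrow> 'c list \<Rightarrow> 'c set \<Rightarrow> 'c set \<Rightarrow> bool" where
  "suitable_pair U Rs Z \<pi> A B \<longleftrightarrow>
     A \<in> Rs \<and> B \<in> Rs \<and> A \<noteq> B \<and>
     (\<exists>Q. overlap_component Rs Q \<and> A \<in> Q \<and> B \<in> Q) \<and>
     A \<inter> Z \<noteq> {} \<and> B \<inter> Z \<noteq> {} \<and>
     (\<exists>c\<in>U. c \<notin> Z \<and>
        ((\<forall>a\<in>A. pos \<pi> a < pos \<pi> c) \<and> (\<forall>b\<in>B. pos \<pi> c < pos \<pi> b) \<or>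
         (\<forall>b\<in>B. pos \<pi> b < pos \<pi> c) \<and> (\<forall>a\<in>A. pos \<pi> c < pos \<pi> a)))"

end

theory Submission
  imports Defs
begin

lemma rend_ge: "finite A \<Longrightarrow> a \<in> A \<Longrightarrow> pos \<pi> a \<le> rend \<pi> A"
  unfolding rend_def by (simp add: Max_ge)

lemma lend_le: "finite A \<Longrightarrow> a \<in> A \<Longrightarrow> lend \<pi> A \<le> pos \<pi> a"
  unfolding lend_def by (simp add: Min_le)

lemma comp_sub: "overlap_component Rs Q \<Longrightarrow> Q \<subseteq> Rs"
  unfolding overlap_component_def by auto

theorem mainTheorem7:
  fixes U :: "'c set" and Rs RQ :: "'c set set" and Z A' B' :: "'c set" and \<pi> :: "'c list"
  assumes "finite U"
    and "\<forall>R\<in>Rs. R \<subseteq> U"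
    and "Z \<subseteq> U"
    and "c1_ordering U Rs \<pi>"
    and "\<not> has_C1P U (Rs \<union> {Z})"
    and "overlap_component Rs RQ"
    and "\<exists>R\<in>RQ. R \<inter> Z \<noteq> {}"
    and "A' \<in> RQ" "A' \<inter> Z \<noteq> {}"
    and "\<forall>X\<in>RQ. X \<inter> Z \<noteq> {} \<longrightarrow> rend \<pi> A' \<le> rend \<pi> X"
    and "B' \<in> RQ" "B' \<inter> Z \<noteq> {}"
    and "\<forall>X\<in>RQ. X \<inter> Z \<noteq> {} \<longrightarrow> lend \<pi> X \<le> lend \<pi> B'"
  shows "((\<exists>A\<in>RQ. \<exists>B\<in>RQ. suitable_pair U Rs Z \<pi> A B) \<longleftrightarrow>
           (\<exists>c\<in>U. c \<notin> Z \<and> rend \<pi> A' < pos \<pi> c \<and> pos \<pi> c < lend \<pi> B'))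
         \<and> ((\<exists>c\<in>U. c \<notin> Z \<and> rend \<pi> A' < pos \<pi> c \<and> pos \<pi> c < lend \<pi> B')
              \<longrightarrow> suitable_pair U Rs Z \<pi> A' B')"
  proof -
  have RQs: "RQ \<subseteq> Rs" using comp_sub assms(6) .
  have fin: "\<And>X. X \<in> RQ \<Longrightarrow> finite X" using RQs assms(1,2) finite_subset by blast
  have dir2: "suitable_pair U Rs Z \<pi> A' B'"
    if c: "c \<in> U" "c \<notin> Z" "rend \<pi> A' < pos \<pi> c" "pos \<pi> c < lend \<pi> B'" for c
  proof -
    obtain a where a: "a \<in> A'" using assms(9) by blast
    have "lend \<pi> A' \<le> rend \<pi> A'" using rend_ge[OF fin[OF assms(8)] a, of \<pi>] lend_le[OF fin[OF assms(8)] a, of \<pi>] by simp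
    hence ne: "A' \<noteq> B'" using c by auto
    have "\<forall>x\<in>A'. pos \<pi> x < pos \<pi> c" using rend_ge[OF fin[OF assms(8)]] c by (meson le_less_trans)
    moreover have "\<forall>x\<in>B'. pos \<pi> c < pos \<pi> x" using lend_le[OF fin[OF assms(11)]] c by (meson less_le_trans)
    ultimately show ?thesis unfolding suitable_pair_def
      using ne assms(6,8,9,11,12) RQs c by blast
  qed
  have dir1: "\<exists>c\<in>U. c \<notin> Z \<and> rend \<pi> A' < pos \<pi> c \<and> pos \<pi> c < lend \<pi> B'"
    if "A \<in> RQ" "B \<in> RQ" "suitable_pair U Rs Z \<pi> A B" for A B
  proof -
    have key: "\<exists>c\<in>U. c \<notin> Z \<and> rend \<pi> A' < pos \<pi> c \<and> pos \<pi> c < lend \<pi> B'"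
      if X: "X \<in> RQ" "X \<inter> Z \<noteq> {}" and Y: "Y \<in> RQ" "Y \<inter> Z \<noteq> {}" and c: "c \<in> U" "c \<notin> Z"
        and h1: "\<forall>x\<in>X. pos \<pi> x < pos \<pi> c" and h2: "\<forall>y\<in>Y. pos \<pi> c < pos \<pi> y" for X Y c
    proof -
      obtain x where x: "x \<in> X" using X by blast
      obtain y where y: "y \<in> Y" using Y by blast
      have "rend \<pi> X < pos \<pi> c"
      proof -
        have "rend \<pi> X \<in> pos \<pi> ` X" unfolding rend_def using fin[OF X(1)] x by (intro Max_in) auto
        thus ?thesis using h1 by auto
      qed
      moreover have "pos \<pi> c < lend \<pi> Y"
      proof -
        have "lend \<pi> Y \<in> pos \<pi> ` Y" unfolding lend_def using fin[OF Y(1)] y by (intro Min_in) auto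
        thus ?thesis using h2 by auto
      qed
      moreover have "rend \<pi> A' \<le> rend \<pi> X" using assms(10) X by blast
      moreover have "lend \<pi> Y \<le> lend \<pi> B'" using assms(13) Y by blast
      ultimately show ?thesis using c by (meson le_less_trans less_le_trans)
    qed
    from that(3) obtain c where "c \<in> U" "c \<notin> Z" "A \<inter> Z \<noteq> {}" "B \<inter> Z \<noteq> {}"
      "(\<forall>a\<in>A. pos \<pi> a < pos \<pi> c) \<and> (\<forall>b\<in>B. pos \<pi> c < pos \<pi> b) \<or>
         (\<forall>b\<in>B. pos \<pi> b < pos \<pi> c) \<and> (\<forall>a\<in>A. pos \<pi> c < pos \<pi> a)"
      unfolding suitable_pair_def by blast
    thus ?thesis using key that(1,2) by blast
  qed
  show ?thesis using dir1 dir2 assms(8,11) by blast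
qed

end
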